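(* Let $G\le\mathrm{O}(d)$ be finite and $x\in\mathbb{R}^d$. The following are equivalent: (a) $x\in P(G)$; (b) $G$ acts freely and transitively on the collection $\{V_p\}_{p\in[x]}$ via $g\cdot V_p:=V_{gp}$ (i.e. the sets $V_{gx}$, $g\in G$, are pairwise distinct); (c) for every $y\in\mathbb{R}^d$, $y\in V_x$ implies $x\in V_y$.
   Context: For $x\in\mathbb{R}^d$, $[x]:=\{gx:g\in G\}$. The open Voronoi cell $V_x$ is the set of $y\in\mathbb{R}^d$ such that $x$ is the unique maximizer of $\langle p,y\rangle$ over $p\in[x]$. The set of principal points is $P(G):=\{x\in\mathbb{R}^d:\mathrm{stab}_G(x)=\{\mathrm{id}\}\}$. *)

theory Defs
  imports "HOL-Analysis.Analysis"
begin

definition finite_orth_group :: "(real^'n^'n) set \<Rightarrow> bool" where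
  "finite_orth_group G \<longleftrightarrow> finite G \<and> (\<forall>A\<in>G. orthogonal_matrix A) \<and> mat 1 \<in> G
     \<and> (\<forall>A\<in>G. \<forall>B\<in>G. A ** B \<in> G) \<and> (\<forall>A\<in>G. transpose A \<in> G)"

definition orbit :: "(real^'n^'n) set \<Rightarrow> real^'n \<Rightarrow> (real^'n) set" where
  "orbit G x = {g *v x | g. g \<in> G}"

definition voronoi :: "(real^'n^'n) set \<Rightarrow> real^'n \<Rightarrow> (real^'n) set" where
  "voronoi G x = {y. (\<forall>p\<in>orbit G x. inner p y \<le> inner x y)
                   \<and> (\<forall>p\<in>orbit G x. inner p y = inner x y \<longrightarrow> p = x)}"

definition stab :: "(real^'n^'n) set \<Rightarrow> real^'n \<Rightarrow> (real^'n^'n) set" where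
  "stab G x = {g\<in>G. g *v x = x}"

definition principal_points :: "(real^'n^'n) set \<Rightarrow> (real^'n) set" where
  "principal_points G = {x. stab G x = {mat 1}}"

end

theory Submission
  imports Defs
begin

lemma inner_mv: "inner ((g::real^'n^'n) *v a) b = inner a (transpose g *v b)"
  by (metis dot_lmul_matrix vector_transpose_matrix)

lemma orth_inner:
  assumes "orthogonal_matrix (g::real^'n^'n)"
  shows "inner (g *v a) (g *v b) = inner a b"
proof -
  have "inner (g *v a) (g *v b) = inner a ((transpose g ** g) *v b)"
    by (simp add: inner_mv matrix_vector_mul_assoc)
  also have "\<dots> = inner a b" using assms by (simp add: orthogonal_matrix)
  finally show ?thesis .
qed

lemma eq_norm_inner:
  fixes p q :: "real^'n"
  assumes "inner p p = inner q q"
  shows "inner p q \<le> inner q q" "inner p q = inner q q \<Longrightarrow> p = q"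
proof -
  have "0 \<le> inner (p - q) (p - q)" by simp
  also have "inner (p - q) (p - q) = inner p p + inner q q - 2 * inner p q"
    by (simp add: inner_diff inner_commute)
  finally show "inner p q \<le> inner q q" using assms by simp
  show "p = q" if "inner p q = inner q q"
  proof -
    have "inner (p - q) (p - q) = 0"
      using assms that by (simp add: inner_diff inner_commute)
    thus ?thesis by simp
  qed
qed

locale fog =
  fixes G :: "(real^'n^'n) set"
  assumes fg: "finite_orth_group G"
begin

lemma fin: "finite G" and orth: "g \<in> G \<Longrightarrow> orthogonal_matrix g" and one: "mat 1 \<in> G"
  and mul: "g \<in> G \<Longrightarrow> h \<in> G \<Longrightarrow> g ** h \<in> G" and tr: "g \<in> G \<Longrightarrow> transpose g \<in> G"
  using fg unfolding finite_orth_group_def by auto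

lemma orbit_mv: "g \<in> G \<Longrightarrow> orbit G (g *v x) = orbit G x"
proof
  assume g: "g \<in> G"
  show "orbit G (g *v x) \<subseteq> orbit G x"
    using mul[OF _ g] by (auto simp: orbit_def matrix_vector_mul_assoc)
  show "orbit G x \<subseteq> orbit G (g *v x)"
  proof
    fix p assume "p \<in> orbit G x"
    then obtain h where h: "h \<in> G" "p = h *v x" by (auto simp: orbit_def)
    have "(h ** transpose g) *v (g *v x) = h *v ((transpose g ** g) *v x)"
      by (simp add: matrix_vector_mul_assoc matrix_mul_assoc)
    also have "\<dots> = p" using orth[OF g] h by (simp add: orthogonal_matrix)
    finally show "p \<in> orbit G (g *v x)" using mul[OF h(1) tr[OF g]]
      unfolding orbit_def by (metis (mono_tags, lifting) mem_Collect_eq)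
  qed
qed

lemma orbit_norm: "p \<in> orbit G x \<Longrightarrow> inner p p = inner x x"
  using orth by (auto simp: orbit_def orth_inner)

lemma self_in: "x \<in> voronoi G x"
  unfolding voronoi_def using orbit_norm eq_norm_inner by blast

lemma not_in: "p \<in> orbit G x \<Longrightarrow> x \<in> voronoi G p \<Longrightarrow> p = x"
proof -
  assume p: "p \<in> orbit G x" and v: "x \<in> voronoi G p"
  then obtain h where h: "h \<in> G" "p = h *v x" by (auto simp: orbit_def)
  have "x \<in> orbit G p" using orbit_mv[OF h(1), of x] h one
    by (auto simp: orbit_def)
  hence "inner x x \<le> inner p x" using v by (auto simp: voronoi_def)
  moreover have "inner p x \<le> inner x x" using eq_norm_inner(1) orbit_norm[OF p] by blast
  ultimately have "inner p x = inner x x" by simp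
  thus "p = x" using eq_norm_inner(2) orbit_norm[OF p] by blast
qed

lemma part1: "x \<in> principal_points G
          \<longleftrightarrow> (\<forall>g\<in>G. \<forall>h\<in>G. voronoi G (g *v x) = voronoi G (h *v x) \<longrightarrow> g = h)"
proof
  assume P: "x \<in> principal_points G"
  show "\<forall>g\<in>G. \<forall>h\<in>G. voronoi G (g *v x) = voronoi G (h *v x) \<longrightarrow> g = h"
  proof (intro ballI impI)
    fix g h assume g: "g \<in> G" and h: "h \<in> G" and e: "voronoi G (g *v x) = voronoi G (h *v x)"
    have "g *v x \<in> voronoi G (h *v x)" using e self_in by blast
    moreover have "h *v x \<in> orbit G (g *v x)" using orbit_mv[OF g] h by (auto simp: orbit_def)
    ultimately have hg: "h *v x = g *v x" using not_in by blast
    have "(transpose g ** h) *v x = transpose g *v (g *v x)"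
      by (metis matrix_vector_mul_assoc hg)
    also have "\<dots> = x" using orth[OF g] by (simp add: matrix_vector_mul_assoc orthogonal_matrix)
    finally have "transpose g ** h \<in> stab G x" using mul[OF tr[OF g] h] by (simp add: stab_def)
    hence "transpose g ** h = mat 1" using P by (simp add: principal_points_def)
    hence "g ** (transpose g ** h) = g" by simp
    moreover have "g ** transpose g = mat 1" using orth[OF g] by (simp add: orthogonal_matrix_def)
    ultimately show "g = h" by (metis matrix_mul_assoc matrix_mul_lid)
  qed
next
  assume I: "\<forall>g\<in>G. \<forall>h\<in>G. voronoi G (g *v x) = voronoi G (h *v x) \<longrightarrow> g = h"
  have "stab G x = {mat 1}"
  proof
    show "stab G x \<subseteq> {mat 1}"
    proof
      fix g assume "g \<in> stab G x"
      hence "g \<in> G" "g *v x = mat 1 *v x" by (auto simp: stab_def)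
      hence "voronoi G (g *v x) = voronoi G (mat 1 *v x)" by simp
      thus "g \<in> {mat 1}" using I one \<open>g \<in> G\<close> by blast
    qed
    show "{mat 1} \<subseteq> stab G x" using one by (simp add: stab_def)
  qed
  thus "x \<in> principal_points G" by (simp add: principal_points_def)
qed

lemma tr_fix: "g \<in> G \<Longrightarrow> g *v x = x \<Longrightarrow> transpose g *v x = x"
  using orth by (metis matrix_vector_mul_assoc matrix_vector_mul_lid orthogonal_matrix)

lemma part2: "x \<in> principal_points G
          \<longleftrightarrow> (\<forall>y. y \<in> voronoi G x \<longrightarrow> x \<in> voronoi G y)"
proof
  assume P: "x \<in> principal_points G"
  show "\<forall>y. y \<in> voronoi G x \<longrightarrow> x \<in> voronoi G y"
  proof (intro allI impI)
    fix y assume y: "y \<in> voronoi G x"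
    have key: "inner p x \<le> inner y x \<and> (inner p x = inner y x \<longrightarrow> p = y)" if p: "p \<in> orbit G y" for p
    proof -
      obtain g where g: "g \<in> G" "p = g *v y" using p by (auto simp: orbit_def)
      define q where "q = transpose g *v x"
      have q: "q \<in> orbit G x" using tr[OF g(1)] unfolding q_def orbit_def by blast
      have e: "inner p x = inner q y" using g by (metis q_def inner_mv inner_commute)
      have "inner q y \<le> inner x y" using y q by (auto simp: voronoi_def)
      moreover have "p = y" if "inner p x = inner y x"
      proof -
        have "q = x" using y q that e by (auto simp: voronoi_def inner_commute)
        hence "transpose g \<in> stab G x" using tr[OF g(1)] by (simp add: stab_def q_def)
        hence "transpose g = mat 1" using P by (simp add: principal_points_def)
        hence "g = mat 1" by (metis transpose_transpose transpose_mat)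
        thus ?thesis using g by simp
      qed
      ultimately show ?thesis using e by (simp add: inner_commute)
    qed
    show "x \<in> voronoi G y" unfolding voronoi_def using key by blast
  qed
next
  assume C: "\<forall>y. y \<in> voronoi G x \<longrightarrow> x \<in> voronoi G y"
  show "x \<in> principal_points G"
  proof (rule ccontr)
    assume "x \<notin> principal_points G"
    moreover have "mat 1 \<in> stab G x" using one by (simp add: stab_def)
    ultimately obtain g where g: "g \<in> G" "g *v x = x" "g \<noteq> mat 1"
      unfolding principal_points_def stab_def by blast
    obtain z where z: "g *v z \<noteq> z"
      using g(3) by (metis matrix_eq matrix_vector_mul_lid)
    hence zn: "norm z > 0" by (metis matrix_vector_mult_0_right zero_less_norm_iff)
    define F where "F = orbit G x - {x}"
    have finF: "finite F"
    proof -
      have "orbit G x = (\<lambda>g. g *v x) ` G" by (auto simp: orbit_def)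
      thus ?thesis using fin by (simp add: F_def)
    qed
    define U where "U = (\<Inter>p\<in>F. {y. inner (x - p) y > 0})"
    have oU: "open U" unfolding U_def using finF by (auto intro!: open_INT open_halfspace_gt)
    have xU: "x \<in> U"
    proof -
      have "inner (x - p) x > 0" if "p \<in> F" for p
      proof -
        have pn: "inner p p = inner x x" "p \<noteq> x" using that orbit_norm by (auto simp: F_def)
        have "inner p x < inner x x" using eq_norm_inner[OF pn(1)] pn(2) by force
        thus ?thesis by (simp add: inner_diff_left)
      qed
      thus ?thesis by (simp add: U_def)
    qed
    have UV: "U \<subseteq> voronoi G x"
    proof
      fix y assume "y \<in> U"
      hence "p \<in> orbit G x \<Longrightarrow> p \<noteq> x \<Longrightarrow> inner p y < inner x y" for p
        by (auto simp: U_def F_def inner_diff_left)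
      thus "y \<in> voronoi G x" unfolding voronoi_def by force
    qed
    obtain e where e: "e > 0" "ball x e \<subseteq> U" using oU xU openE by blast
    define c where "c = e / 2 / norm z"
    have c: "c > 0" using e zn by (simp add: c_def)
    define y where "y = x + c *\<^sub>R z"
    have "dist x y = e / 2" using zn e by (simp add: y_def dist_norm c_def)
    hence "y \<in> ball x e" using e by simp
    hence "y \<in> voronoi G x" using e UV by blast
    hence xy: "x \<in> voronoi G y" using C by blast
    have gy: "g *v y = x + c *\<^sub>R (g *v z)"
      by (simp add: y_def matrix_vector_right_distrib g(2) matrix_vector_mult_scaleR)
    have ne: "g *v y \<noteq> y" using gy z c by (simp add: y_def)
    have po: "g *v y \<in> orbit G y" using g(1) by (auto simp: orbit_def)
    have "inner (g *v y) x = inner y x" using tr_fix[OF g(1,2)] by (simp add: inner_mv)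
    hence "g *v y = y" using xy po by (auto simp: voronoi_def)
    thus False using ne by simp
  qed
qed

end

theorem lemma23:
  fixes G :: "(real^'n^'n) set" and x :: "real^'n"
  assumes "finite_orth_group G"
  shows "(x \<in> principal_points G
          \<longleftrightarrow> (\<forall>g\<in>G. \<forall>h\<in>G. voronoi G (g *v x) = voronoi G (h *v x) \<longrightarrow> g = h))
       \<and> (x \<in> principal_points G
          \<longleftrightarrow> (\<forall>y. y \<in> voronoi G x \<longrightarrow> x \<in> voronoi G y))"
  using fog.part1[OF fog.intro[OF assms]] fog.part2[OF fog.intro[OF assms]] by blast

end
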